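(* Fix $x\in\mathbb{R}^d$. For every step $t$ and every two distinct centers $c',c''\in C_t$ with $\|c'-c''\|_2\ge D_t/2$, $$\Pr\big\{c'\notin C_{t+1}\text{ or } c''\notin C_{t+1}\mid\mathcal{T}_t\big\}\ge\frac{1}{128d}.$$
   Context: Centers $C=\{c^1,\dots,c^k\}\subset\mathbb{R}^d$, $\delta\in(0,1)$, $\varepsilon=\min\{\delta/(15\ln k),1/320\}$. A median of a finite nonempty $S\subset\mathbb{R}^d$ is a point $m$ such that for every coordinate $i$ each of $\{c\in S:c_i<m_i\}$, $\{c\in S:c_i>m_i\}$ has at most $|S|/2$ elements. Algorithm: $\mathcal{T}_1$ is a root (cell $\mathbb{R}^d$) with assigned centers $C$. For $t=1,2,\dots$, while some leaf has at least two assigned centers: sample independently $i_t$ uniform in $\{1,\dots,d\}$, $\theta_t$ uniform in $(0,1)$, $\sigma_t$ uniform in $\{\pm1\}$; to every leaf $u$ of $\mathcal{T}_t$ with $|C_u|\ge2$ apply Divide-and-Share with $(i,\theta,\sigma)=(i_t,\theta_t,\sigma_t)$, giving $\mathcal{T}_{t+1}$. Divide-and-Share on node $u$: $m^u$ a median of $C_u$, $R_u=\max_{c\in C_u}\|c-m^u\|_2$, $Left=\{c\in C_u:c_i\le m^u_i+(\sigma+\varepsilon)\sqrt\theta R_u\}$, $Right=\{c\in C_u:c_i\ge m^u_i+(\sigma-\varepsilon)\sqrt\theta R_u\}$; if both nonempty, $u$ is split into children $\{y\in u: y_i\le m^u_i+\sigma\sqrt\theta R_u\}$ with centers $Left$ and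 $\{y\in u: y_i> m^u_i+\sigma\sqrt\theta R_u\}$ with centers $Right$; otherwise $u$ is unchanged. For the fixed point $x$, $u_t$ denotes the leaf of $\mathcal{T}_t$ containing $x$, $C_t=C_{u_t}$, and $D_t=\max\{\|a-b\|_2:a,b\in C_t\}$. If the algorithm has stopped before step $s$, $\mathcal{T}_s$ denotes the final tree. *)

theory Defs
  imports "HOL-Probability.Probability"
begin

text \<open>Points of R^d are vectors real^'d indexed by a finite type 'd (d = CARD('d)).
  A node of the tree is a pair (cell, assigned centers).  The tree state T_t is
  represented by the set of its leaves.\<close>

type_synonym 'd node = "(real^'d) set \<times> (real^'d) set"

type_synonym 'd sample = "'d \<times> real \<times> real"

definition is_median :: "(real^'d) set \<Rightarrow> real^'d \<Rightarrow> bool" where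
  "is_median S m \<longleftrightarrow>
     (\<forall>i. real (card {c\<in>S. c$i < m$i}) \<le> real (card S) / 2 \<and>
          real (card {c\<in>S. c$i > m$i}) \<le> real (card S) / 2)"

text \<open>med U S is the median chosen by the algorithm for the node with cell U and centers S.\<close>
definition divide_and_share ::
  "real \<Rightarrow> ((real^'d) set \<Rightarrow> (real^'d) set \<Rightarrow> real^'d) \<Rightarrow> 'd sample \<Rightarrow> 'd node \<Rightarrow> 'd node set" where
  "divide_and_share \<epsilon> med s u = (case s of (i, \<theta>, \<sigma>) \<Rightarrow> case u of (U, S) \<Rightarrow>
     let m = med U S;
         R = Max ((\<lambda>c. norm (c - m)) ` S);
         L = {c\<in>S. c$i \<le> m$i + (\<sigma> + \<epsilon>) * sqrt \<theta> * R};
         Rt = {c\<in>S. c$i \<ge> m$i + (\<sigma> - \<epsilon>) * sqrt \<theta> * R}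
     in if L \<noteq> {} \<and> Rt \<noteq> {}
        then {({y\<in>U. y$i \<le> m$i + \<sigma> * sqrt \<theta> * R}, L),
              ({y\<in>U. y$i > m$i + \<sigma> * sqrt \<theta> * R}, Rt)}
        else {(U, S)})"

text \<open>One round: apply Divide-and-Share with the common sample to every leaf with at
  least two centers.  (If no such leaf exists, the tree is unchanged, which models
  "the final tree" after stopping.)\<close>
definition tree_step ::
  "real \<Rightarrow> ((real^'d) set \<Rightarrow> (real^'d) set \<Rightarrow> real^'d) \<Rightarrow> 'd sample \<Rightarrow> 'd node set \<Rightarrow> 'd node set" where
  "tree_step \<epsilon> med s T = (\<Union>u\<in>T. if card (snd u) \<ge> 2 then divide_and_share \<epsilon> med s u else {u})"

text \<open>tree \<epsilon> med C h t = leaves of T_t (t \<ge> 1), where h s is the sample used at step s.\<close>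
primrec tree ::
  "real \<Rightarrow> ((real^'d) set \<Rightarrow> (real^'d) set \<Rightarrow> real^'d) \<Rightarrow> (real^'d) set \<Rightarrow> (nat \<Rightarrow> 'd sample)
   \<Rightarrow> nat \<Rightarrow> 'd node set" where
  "tree \<epsilon> med C h 0 = {(UNIV, C)}"
| "tree \<epsilon> med C h (Suc t) = (if t = 0 then {(UNIV, C)} else tree_step \<epsilon> med (h t) (tree \<epsilon> med C h t))"

definition leaf_centers :: "'d node set \<Rightarrow> real^'d \<Rightarrow> (real^'d) set" where
  "leaf_centers T x = \<Union>{S. \<exists>U. (U, S) \<in> T \<and> x \<in> U}"

definition diam_centers :: "(real^'d) set \<Rightarrow> real" where
  "diam_centers S = Max ((\<lambda>(a, b). dist a b) ` (S \<times> S))"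

definition sample_space :: "('d::finite) sample measure" where
  "sample_space = measure_pmf (pmf_of_set (UNIV :: 'd set)) \<Otimes>\<^sub>M
     (uniform_measure lborel {0<..<1} \<Otimes>\<^sub>M measure_pmf (pmf_of_set {-1, 1 :: real}))"

end

theory Submission
  imports Defs
begin

lemma pred_sample:
  assumes "\<And>i. Measurable.pred (borel \<Otimes>\<^sub>M borel) (\<lambda>p::real\<times>real. P i (fst p) (snd p))"
  shows "Measurable.pred (sample_space :: ('d::finite) sample measure) (\<lambda>s. P (fst s) (fst (snd s)) (snd (snd s)))"
proof -
  have id: "(\<lambda>p. p) \<in> measurable (uniform_measure lborel {0<..<1::real} \<Otimes>\<^sub>M measure_pmf (pmf_of_set {-1, 1 :: real})) (borel \<Otimes>\<^sub>M borel)"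
  proof (rule measurable_Pair[where f=fst and g=snd, simplified])
    show "snd \<in> borel_measurable (uniform_measure lborel {0<..<1::real} \<Otimes>\<^sub>M measure_pmf (pmf_of_set {-1, 1 :: real}))"
      by (rule measurable_compose[OF measurable_snd]) simp
  qed auto
  have "Measurable.pred sample_space (\<lambda>s. \<exists>i\<in>UNIV. fst s = i \<and> P i (fst (snd s)) (snd (snd s)))"
  proof (rule pred_intros_finite)
    fix i :: 'd
    have 1: "Measurable.pred sample_space (\<lambda>s. fst s = i)" unfolding sample_space_def by measurable
    have 2: "Measurable.pred sample_space (\<lambda>s. P i (fst (snd s)) (snd (snd s)))"
      unfolding sample_space_def
      by (rule measurable_compose[OF measurable_compose[OF measurable_snd id] assms[of i], simplified])
    show "Measurable.pred sample_space (\<lambda>s. fst s = i \<and> P i (fst (snd s)) (snd (snd s)))"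
      using 1 2 by measurable
  qed simp
  then show ?thesis by simp
qed



lemma unif_prob: "prob_space (uniform_measure lborel {0<..<1::real})"
  by (rule prob_space_uniform_measure) auto

lemma sample_prob: "prob_space (sample_space :: ('d::finite) sample measure)"
  unfolding sample_space_def
  by (intro prob_space_pair unif_prob measure_pmf.prob_space_axioms)

lemma meas_box:
  assumes "0 \<le> l" "hh \<le> 1" "\<sigma> \<in> {-1, 1::real}"
  shows "measure (sample_space :: ('d::finite) sample measure) ({i} \<times> ({l<..<hh} \<times> {\<sigma>}))
         = max 0 (hh - l) / (2 * real CARD('d))"
proof -
  interpret P2: prob_space "uniform_measure lborel {0<..<1::real} \<Otimes>\<^sub>M measure_pmf (pmf_of_set {-1, 1 :: real})"
    by (intro prob_space_pair unif_prob measure_pmf.prob_space_axioms)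
  interpret U: prob_space "uniform_measure lborel {0<..<1::real}" by (rule unif_prob)
  have int: "{0<..<1::real} \<inter> {l<..<hh} = {l<..<hh}" using assms by auto
  have e2: "emeasure (uniform_measure lborel {0<..<1::real}) {l<..<hh} = ennreal (max 0 (hh - l))"
  proof (cases "l \<le> hh")
    case True then show ?thesis using assms by (simp add: int max_def min_def divide_ennreal_def)
  next
    case False then show ?thesis by (simp add: int max_def)
  qed
  have e3: "emeasure (measure_pmf (pmf_of_set {-1, 1 :: real})) {\<sigma>} = ennreal (1/2)"
    using assms(3) by (auto simp: emeasure_pmf_single)
  have e1: "emeasure (measure_pmf (pmf_of_set (UNIV :: 'd set))) {i} = ennreal (1 / real CARD('d))"
    by (simp add: emeasure_pmf_single)
  have "emeasure (sample_space :: ('d::finite) sample measure) ({i} \<times> ({l<..<hh} \<times> {\<sigma>}))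
     = ennreal (1 / real CARD('d)) * (ennreal (max 0 (hh - l)) * ennreal (1/2))"
    unfolding sample_space_def
    by (simp add: P2.emeasure_pair_measure_Times measure_pmf.emeasure_pair_measure_Times e1 e2 e3)
  also have "\<dots> = ennreal (max 0 (hh - l) / (2 * real CARD('d)))"
  proof -
    have a: "0 \<le> max 0 (hh - l)" by simp
    have b: "0 \<le> 1 / real CARD('d)" by simp
    have c: "0 \<le> (1/2::real)" by simp
    have "ennreal (1 / real CARD('d)) * (ennreal (max 0 (hh - l)) * ennreal (1/2))
       = ennreal (1 / real CARD('d) * (max 0 (hh - l) * (1/2)))"
      by (metis a b c ennreal_mult mult_nonneg_nonneg)
    also have "1 / real CARD('d) * (max 0 (hh - l) * (1/2)) = max 0 (hh - l) / (2 * real CARD('d))"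
      by simp
    finally show ?thesis .
  qed
  finally show ?thesis by (simp add: measure_def)
qed

lemma child_props:
  assumes "v \<in> (if 2 \<le> card (snd u) then divide_and_share e med s u else {u})"
  shows "fst v \<subseteq> fst u \<and> snd v \<subseteq> snd u"
  using assms
  by (cases s; cases u) (auto simp: divide_and_share_def Let_def split: if_splits)

lemma child_uniq:
  assumes "v \<in> (if 2 \<le> card (snd u) then divide_and_share e med s u else {u})"
    and "v' \<in> (if 2 \<le> card (snd u) then divide_and_share e med s u else {u})"
    and "y \<in> fst v" "y \<in> fst v'"
  shows "v = v'"
  using assms
  by (cases s; cases u) (auto simp: divide_and_share_def Let_def split: if_splits)

lemma step_inv:
  assumes "\<forall>u\<in>T. snd u \<subseteq> C" "\<forall>y. \<forall>u\<in>T. \<forall>v\<in>T. y \<in> fst u \<longrightarrow> y \<in> fst v \<longrightarrow> u = v"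
  shows "(\<forall>u\<in>tree_step e med s T. snd u \<subseteq> C) \<and>
         (\<forall>y. \<forall>u\<in>tree_step e med s T. \<forall>v\<in>tree_step e med s T. y \<in> fst u \<longrightarrow> y \<in> fst v \<longrightarrow> u = v)"
proof (intro conjI allI ballI impI)
  fix u assume "u \<in> tree_step e med s T"
  then obtain w where "w \<in> T" "u \<in> (if 2 \<le> card (snd w) then divide_and_share e med s w else {w})"
    unfolding tree_step_def by blast
  then show "snd u \<subseteq> C" using child_props assms(1) by blast
next
  fix y u v assume u: "u \<in> tree_step e med s T" and v: "v \<in> tree_step e med s T"
    and yu: "y \<in> fst u" and yv: "y \<in> fst v"
  from u obtain w where w: "w \<in> T" "u \<in> (if 2 \<le> card (snd w) then divide_and_share e med s w else {w})"
    unfolding tree_step_def by blast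
  from v obtain w' where w': "w' \<in> T" "v \<in> (if 2 \<le> card (snd w') then divide_and_share e med s w' else {w'})"
    unfolding tree_step_def by blast
  have "y \<in> fst w" using child_props[OF w(2)] yu by auto
  moreover have "y \<in> fst w'" using child_props[OF w'(2)] yv by auto
  ultimately have "w = w'" using assms(2) w(1) w'(1) by blast
  then have v2: "v \<in> (if 2 \<le> card (snd w) then divide_and_share e med s w else {w})" using w'(2) by (simp split: if_splits)
  show "u = v" by (rule child_uniq[OF w(2) v2 yu yv])
qed

lemma tree_inv:
  "(\<forall>u\<in>tree e med C h t. snd u \<subseteq> C) \<and>
   (\<forall>y. \<forall>u\<in>tree e med C h t. \<forall>v\<in>tree e med C h t. y \<in> fst u \<longrightarrow> y \<in> fst v \<longrightarrow> u = v)"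
proof (induction t)
  case 0 then show ?case by simp
next
  case (Suc t)
  show ?case
  proof (cases "t = 0")
    case True then show ?thesis by simp
  next
    case False
    then show ?thesis using step_inv[of "tree e med C h t" C] Suc.IH by simp
  qed
qed

lemma step_leaf:
  assumes uniq: "\<forall>u\<in>T. \<forall>v\<in>T. x \<in> fst u \<longrightarrow> x \<in> fst v \<longrightarrow> u = v"
    and u0: "(U0, S0) \<in> T" "x \<in> U0" "2 \<le> card S0"
  shows "leaf_centers (tree_step e med s T) x = leaf_centers (divide_and_share e med s (U0, S0)) x"
proof -
  have "\<And>U S. ((U, S) \<in> tree_step e med s T \<and> x \<in> U) \<longleftrightarrow> ((U, S) \<in> divide_and_share e med s (U0, S0) \<and> x \<in> U)"
  proof
    fix U S assume a: "(U, S) \<in> tree_step e med s T \<and> x \<in> U"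
    then obtain w where w: "w \<in> T" "(U, S) \<in> (if 2 \<le> card (snd w) then divide_and_share e med s w else {w})"
      unfolding tree_step_def by blast
    have "x \<in> fst w" using child_props[OF w(2)] a by auto
    then have "w = (U0, S0)" using uniq w(1) u0 by auto
    then show "(U, S) \<in> divide_and_share e med s (U0, S0) \<and> x \<in> U" using w(2) a u0 by simp
  next
    fix U S assume a: "(U, S) \<in> divide_and_share e med s (U0, S0) \<and> x \<in> U"
    then show "(U, S) \<in> tree_step e med s T \<and> x \<in> U"
      unfolding tree_step_def using u0 by force
  qed
  then show ?thesis unfolding leaf_centers_def by simp
qed

lemma lc2: "leaf_centers {(A, L), (B, Rt)} x = (if x \<in> A then L else {}) \<union> (if x \<in> B then Rt else {})"
  unfolding leaf_centers_def by auto

lemma lc1: "leaf_centers {(A, L)} x = (if x \<in> A then L else {})"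
  unfolding leaf_centers_def by auto

lemma ds_leaf:
  assumes "x \<in> U0"
  shows "c \<in> leaf_centers (divide_and_share e med s (U0, S0)) x \<longleftrightarrow>
    (let m = med U0 S0; R = Max ((\<lambda>c. norm (c - m)) ` S0); i = fst s; u = sqrt (fst (snd s)); \<sigma> = snd (snd s) in
     c \<in> S0 \<and> ((\<exists>c'\<in>S0. c'$i \<le> m$i + (\<sigma> + e) * u * R) \<and> (\<exists>c'\<in>S0. c'$i \<ge> m$i + (\<sigma> - e) * u * R) \<longrightarrow>
        (x$i \<le> m$i + \<sigma> * u * R \<longrightarrow> c$i \<le> m$i + (\<sigma> + e) * u * R) \<and>
        (\<not> x$i \<le> m$i + \<sigma> * u * R \<longrightarrow> c$i \<ge> m$i + (\<sigma> - e) * u * R)))"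
proof -
  obtain i th sg where s: "s = (i, th, sg)" by (cases s)
  define m where "m = med U0 S0"
  define R where "R = Max ((\<lambda>c. norm (c - m)) ` S0)"
  define L where "L = {c\<in>S0. c$i \<le> m$i + (sg + e) * sqrt th * R}"
  define Rt where "Rt = {c\<in>S0. c$i \<ge> m$i + (sg - e) * sqrt th * R}"
  have ds: "divide_and_share e med s (U0, S0) = (if L \<noteq> {} \<and> Rt \<noteq> {}
        then {({y\<in>U0. y$i \<le> m$i + sg * sqrt th * R}, L), ({y\<in>U0. y$i > m$i + sg * sqrt th * R}, Rt)}
        else {(U0, S0)})"
    unfolding divide_and_share_def s m_def R_def L_def Rt_def by (simp add: Let_def)
  have ne: "(L \<noteq> {} \<and> Rt \<noteq> {}) = ((\<exists>c'\<in>S0. c'$i \<le> m$i + (sg + e) * sqrt th * R) \<and> (\<exists>c'\<in>S0. c'$i \<ge> m$i + (sg - e) * sqrt th * R))"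
    unfolding L_def Rt_def by auto
  show ?thesis
    unfolding ds unfolding Let_def s fst_conv snd_conv m_def[symmetric] R_def[symmetric] ne[symmetric]
    using assms by (auto simp: lc1 lc2 L_def Rt_def)
qed

lemma normsq: "(norm (v::real^'n))^2 = (\<Sum>i\<in>UNIV. (v$i)^2)"
  by (simp add: norm_vec_def L2_set_def sum_nonneg)

lemma card_split: "finite S \<Longrightarrow> card {c\<in>S. P c} + card {c\<in>S. \<not> P c} = card S"
proof -
  assume f: "finite S"
  have "card ({c\<in>S. P c} \<union> {c\<in>S. \<not> P c}) = card {c\<in>S. P c} + card {c\<in>S. \<not> P c}"
    using f by (intro card_Un_disjoint) auto
  moreover have "{c\<in>S. P c} \<union> {c\<in>S. \<not> P c} = S" by auto
  ultimately show ?thesis by simp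
qed

lemma median_coord:
  assumes f: "finite S" and med: "is_median S m" and c: "c \<in> S"
  shows "(c$i - m$i)^2 * real (card S) \<le> 2 * (\<Sum>c'\<in>S. (c$i - c'$i)^2)"
proof (cases "m$i \<le> c$i")
  case True
  define B where "B = {c'\<in>S. \<not> c'$i > m$i}"
  have "real (card {c'\<in>S. c'$i > m$i}) \<le> real (card S) / 2" using med unfolding is_median_def by blast
  moreover have "card {c'\<in>S. c'$i > m$i} + card B = card S" unfolding B_def by (rule card_split[OF f])
  ultimately have cB: "real (card S) \<le> 2 * real (card B)" by linarith
  have "(\<Sum>c'\<in>B. (c$i - m$i)^2) \<le> (\<Sum>c'\<in>B. (c$i - c'$i)^2)"
  proof (rule sum_mono)
    fix c' assume "c' \<in> B"
    then have "c'$i \<le> m$i" unfolding B_def by auto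
    then show "(c$i - m$i)^2 \<le> (c$i - c'$i)^2" using True by (intro power_mono) auto
  qed
  also have "\<dots> \<le> (\<Sum>c'\<in>S. (c$i - c'$i)^2)" using f by (intro sum_mono2) (auto simp: B_def)
  finally have "real (card B) * (c$i - m$i)^2 \<le> (\<Sum>c'\<in>S. (c$i - c'$i)^2)" by simp
  moreover have "(c$i - m$i)^2 * real (card S) \<le> (c$i - m$i)^2 * (2 * real (card B))"
    using cB by (intro mult_left_mono) auto
  ultimately show ?thesis by (simp add: algebra_simps)
next
  case False
  define B where "B = {c'\<in>S. \<not> c'$i < m$i}"
  have "real (card {c'\<in>S. c'$i < m$i}) \<le> real (card S) / 2" using med unfolding is_median_def by blast
  moreover have "card {c'\<in>S. c'$i < m$i} + card B = card S" unfolding B_def by (rule card_split[OF f])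
  ultimately have cB: "real (card S) \<le> 2 * real (card B)" by linarith
  have "(\<Sum>c'\<in>B. (c$i - m$i)^2) \<le> (\<Sum>c'\<in>B. (c$i - c'$i)^2)"
  proof (rule sum_mono)
    fix c' assume "c' \<in> B"
    then have "c'$i \<ge> m$i" unfolding B_def by auto
    then have "(m$i - c$i)^2 \<le> (c'$i - c$i)^2" using False by (intro power_mono) auto
    then show "(c$i - m$i)^2 \<le> (c$i - c'$i)^2" by (simp add: power2_commute)
  qed
  also have "\<dots> \<le> (\<Sum>c'\<in>S. (c$i - c'$i)^2)" using f by (intro sum_mono2) (auto simp: B_def)
  finally have "real (card B) * (c$i - m$i)^2 \<le> (\<Sum>c'\<in>S. (c$i - c'$i)^2)" by simp
  moreover have "(c$i - m$i)^2 * real (card S) \<le> (c$i - m$i)^2 * (2 * real (card B))"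
    using cB by (intro mult_left_mono) auto
  ultimately show ?thesis by (simp add: algebra_simps)
qed

lemma median_norm:
  assumes f: "finite S" and med: "is_median S m" and c: "c \<in> S"
    and D: "\<forall>a\<in>S. \<forall>b\<in>S. dist a b \<le> D"
  shows "(norm (c - m))^2 \<le> 2 * D^2"
proof -
  have n: "real (card S) > 0" using f c card_gt_0_iff by auto
  have "(norm (c - m))^2 * real (card S) = (\<Sum>i\<in>UNIV. (c$i - m$i)^2 * real (card S))"
    by (simp add: normsq sum_distrib_right)
  also have "\<dots> \<le> (\<Sum>i\<in>UNIV. 2 * (\<Sum>c'\<in>S. (c$i - c'$i)^2))"
    by (intro sum_mono median_coord[OF f med c])
  also have "\<dots> = 2 * (\<Sum>c'\<in>S. (norm (c - c'))^2)"
    by (simp add: normsq sum_distrib_left sum.swap[of _ UNIV S])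
  also have "\<dots> \<le> 2 * (\<Sum>c'\<in>S. D^2)"
  proof -
    have "(\<Sum>c'\<in>S. (norm (c - c'))^2) \<le> (\<Sum>c'\<in>S. D^2)"
    proof (rule sum_mono)
      fix c' assume "c' \<in> S"
      then have "norm (c - c') \<le> D" using D c by (simp add: dist_norm)
      then show "(norm (c - c'))^2 \<le> D^2" by (intro power_mono) auto
    qed
    then show ?thesis by simp
  qed
  also have "\<dots> = 2 * D^2 * real (card S)" by simp
  finally show ?thesis using n by simp
qed

lemma sqrt_between:
  fixes y z th :: real
  assumes "0 \<le> y" "0 \<le> z" "y^2 < th" "th < z^2"
  shows "y < sqrt th \<and> sqrt th < z"
proof
  show "y < sqrt th" using real_less_rsqrt[OF assms(3)] .
  have "sqrt th < sqrt (z^2)" by (rule real_sqrt_less_mono[OF assms(4)])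
  then show "sqrt th < z" using assms(2) by simp
qed

lemma eps_facts:
  fixes e :: real
  assumes "0 < e" "e \<le> 1/320"
  shows "1 - 2*e \<le> 1/(1+e)^2" "1/(1-e)^2 \<le> 1 + 5/2*e"
proof -
  have "(1 - 2*e) * (1+e)^2 \<le> 1"
  proof -
    have "(1 - 2*e) * (1+e)^2 = 1 - 3*e^2 - 2*e^3" by (simp add: algebra_simps power2_eq_square power3_eq_cube)
    moreover have "0 \<le> 3*e^2 + 2*e^3" using assms by simp
    ultimately show ?thesis by linarith
  qed
  moreover have "0 < (1+e)^2" using assms by simp
  ultimately show "1 - 2*e \<le> 1/(1+e)^2" by (simp add: field_simps)
  have "1 \<le> (1 + 5/2*e) * (1-e)^2"
  proof -
    have "(1 + 5/2*e) * (1-e)^2 = 1 + e * (1/2 - 4*e + 5/2*e^2)" by (simp add: algebra_simps power2_eq_square)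
    moreover have "0 \<le> e * (1/2 - 4*e + 5/2*e^2)" using assms by (intro mult_nonneg_nonneg) auto
    ultimately show ?thesis by linarith
  qed
  moreover have "0 < (1-e)^2" using assms by simp
  ultimately show "1/(1-e)^2 \<le> 1 + 5/2*e" by (simp add: field_simps)
qed

lemma bound_core:
  fixes e X Y P Q A1 :: real
  assumes "P \<le> X" "Y \<le> Q + 5/2*e*Q" "A1 \<le> P - Q + 2*e*Q" "0 \<le> A1"
  shows "A1 / 4 - 9/2 * e * Q \<le> X - Y"
  using assms by linarith

lemma coord0:
  fixes q p e :: real
  assumes qp: "q \<le> p" and "\<bar>q\<bar> \<le> 1" "\<bar>p\<bar> \<le> 1" and e: "0 < e" "e \<le> 1/320"
  shows "\<exists>\<sigma> l hh. \<sigma> \<in> {-1, 1::real} \<and> 0 \<le> l \<and> hh \<le> 1 \<and>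
     (\<forall>th. l < th \<and> th < hh \<longrightarrow> q < (\<sigma> - e) * sqrt th \<and> p > (\<sigma> + e) * sqrt th) \<and>
     max 0 (hh - l) \<ge> (1 - 2*e) * (p - q)^2 / 4 - 9/2 * e * min (q^2) (p^2)"
proof -
  note ef = eps_facts[OF e]
  have e1: "0 < 1 - e" "1 < 1 + e" using e by auto
  have e2: "0 \<le> 1 - 2*e" using e by auto
  have hb: "(z / (1+e))^2 \<le> 1" if "\<bar>z\<bar> \<le> 1" for z
  proof -
    have "\<bar>z\<bar>^2 \<le> 1^2" using that by (intro power_mono) auto
    then have z1: "z^2 \<le> 1" by simp
    have o: "1 \<le> (1+e)^2" using e1 by (intro one_le_power) simp
    have "z^2 / (1+e)^2 \<le> z^2 / 1" by (rule divide_left_mono[OF o]) (use o in auto)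
    then show ?thesis using z1 by (simp add: power_divide)
  qed
  have lo: "(1 - 2*e) * z^2 \<le> (z / (1+e))^2" for z
  proof -
    have "(1 - 2*e) * z^2 \<le> (1/(1+e)^2) * z^2" by (rule mult_right_mono[OF ef(1)]) simp
    then show ?thesis by (simp add: power_divide)
  qed
  have hi: "(z / (1-e))^2 \<le> z^2 + 5/2*e*z^2" for z
  proof -
    have "(1/(1-e)^2) * z^2 \<le> (1 + 5/2*e) * z^2" by (rule mult_right_mono[OF ef(2)]) simp
    then show ?thesis by (simp add: power_divide algebra_simps)
  qed
  have A1nn: "0 \<le> (1 - 2*e) * (p - q)^2" using e2 by simp
  have sq4: "(1 - 2*e) * (p - q)^2 \<le> (1 - 2*e) * (4 * z^2)" if "(p - q)^2 \<le> 4 * z^2" for z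
    using that e2 by (rule mult_left_mono)
  have twice: "(p - q)^2 \<le> 2 * (p^2 + q^2)"
  proof -
    have "0 \<le> (p + q)^2" by simp
    then show ?thesis by (simp add: power2_eq_square algebra_simps)
  qed
  consider (A) "0 \<le> q" | (B) "p \<le> 0" | (C) "q < 0" "0 < p" "q^2 \<le> p^2" | (D) "q < 0" "0 < p" "p^2 < q^2"
    by linarith
  then show ?thesis
  proof cases
    case A
    show ?thesis
    proof (intro exI conjI allI impI)
      show "(1::real) \<in> {-1, 1}" by simp
      show "0 \<le> (q / (1-e))^2" by simp
      show "(p / (1+e))^2 \<le> 1" using hb assms by simp
      fix th assume th: "(q / (1-e))^2 < th \<and> th < (p / (1+e))^2"
      have "0 \<le> q / (1-e)" "0 \<le> p / (1+e)" using A qp e1 by auto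
      from sqrt_between[OF this th[THEN conjunct1] th[THEN conjunct2]]
      have "q / (1-e) < sqrt th" "sqrt th < p / (1+e)" by auto
      then show "q < (1 - e) * sqrt th" "p > (1 + e) * sqrt th"
        using e1 by (auto simp: field_simps)
    next
      have d: "(p - q)^2 \<le> p^2 - q^2" using A qp mult_right_mono[OF qp A] by (simp add: power2_eq_square algebra_simps)
      have "(1 - 2*e) * (p - q)^2 \<le> (1 - 2*e) * (p^2 - q^2)" using d e2 by (rule mult_left_mono)
      then have d2: "(1 - 2*e) * (p - q)^2 \<le> (1 - 2*e) * p^2 - q^2 + 2*e*q^2" by (simp add: algebra_simps)
      have m: "min (q^2) (p^2) = q^2" using A qp by (simp add: power_mono)
      show "(1 - 2*e) * (p - q)^2 / 4 - 9/2 * e * min (q^2) (p^2) \<le> max 0 ((p / (1+e))^2 - (q / (1-e))^2)"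
        using bound_core[OF lo[of p] hi[of q] d2 A1nn] unfolding m by linarith
    qed
  next
    case B
    show ?thesis
    proof (intro exI conjI allI impI)
      show "(-1::real) \<in> {-1, 1}" by simp
      show "0 \<le> (p / (1-e))^2" by simp
      show "(q / (1+e))^2 \<le> 1" using hb assms by simp
      fix th assume th: "(p / (1-e))^2 < th \<and> th < (q / (1+e))^2"
      have "p / (1-e) \<le> 0" "q / (1+e) \<le> 0" using B qp e1 by (auto intro!: divide_nonpos_pos)
      then have "0 \<le> -p / (1-e)" "0 \<le> -q / (1+e)" by auto
      from sqrt_between[OF this] th
      have h1: "-p / (1-e) < sqrt th" "sqrt th < -q / (1+e)" by (auto simp: power_divide)
      have "-p < sqrt th * (1-e)" using h1(1) e1(1) pos_divide_less_eq[OF e1(1), of "-p" "sqrt th"] by simp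
      moreover have "sqrt th * (1+e) < -q" using h1(2) pos_less_divide_eq[of "1+e" "sqrt th" "-q"] e1 by simp
      moreover have "(-1 - e) * sqrt th = -(sqrt th * (1+e))" "(-1 + e) * sqrt th = -(sqrt th * (1-e))"
        by (simp_all add: algebra_simps)
      ultimately show "q < (-1 - e) * sqrt th" "p > (-1 + e) * sqrt th" by linarith+
    next
      have d: "(p - q)^2 \<le> q^2 - p^2" using B qp mult_left_mono_neg[OF qp B] by (simp add: power2_eq_square algebra_simps)
      have "(1 - 2*e) * (p - q)^2 \<le> (1 - 2*e) * (q^2 - p^2)" using d e2 by (rule mult_left_mono)
      then have d2: "(1 - 2*e) * (p - q)^2 \<le> (1 - 2*e) * q^2 - p^2 + 2*e*p^2" by (simp add: algebra_simps)
      have "(-p)^2 \<le> (-q)^2" using B qp by (intro power_mono) auto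
      then have "p^2 \<le> q^2" by simp
      then have m: "min (q^2) (p^2) = p^2" by simp
      show "(1 - 2*e) * (p - q)^2 / 4 - 9/2 * e * min (q^2) (p^2) \<le> max 0 ((q / (1+e))^2 - (p / (1-e))^2)"
        using bound_core[OF lo[of q] hi[of p] d2 A1nn] unfolding m by linarith
    qed
  next
    case C
    show ?thesis
    proof (intro exI conjI allI impI)
      show "(1::real) \<in> {-1, 1}" by simp
      show "0 \<le> (0::real)" by simp
      show "(p / (1+e))^2 \<le> 1" using hb assms by simp
      fix th assume th: "0 < th \<and> th < (p / (1+e))^2"
      have "0 \<le> (0::real)" "0 \<le> p / (1+e)" using C e1 by auto
      from sqrt_between[OF this] th
      have h1: "0 < sqrt th" "sqrt th < p / (1+e)" by auto
      have "0 < (1 - e) * sqrt th" using h1(1) e1 by simp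
      moreover have "sqrt th * (1+e) < p" using h1(2) e1 by (simp add: pos_less_divide_eq)
      ultimately show "q < (1 - e) * sqrt th" "p > (1 + e) * sqrt th" using C by (simp_all add: mult.commute)
    next
      have "2 * (p^2 + q^2) \<le> 4 * p^2" using C(3) by simp
      then have "(p - q)^2 \<le> 4 * p^2" using twice by linarith
      from sq4[OF this] have "(1 - 2*e) * (p - q)^2 / 4 \<le> (1 - 2*e) * p^2" by simp
      moreover have "0 \<le> e * min (q^2) (p^2)" using e by simp
      ultimately show "(1 - 2*e) * (p - q)^2 / 4 - 9/2 * e * min (q^2) (p^2) \<le> max 0 ((p / (1+e))^2 - 0)"
        using lo[of p] by linarith
    qed
  next
    case D
    show ?thesis
    proof (intro exI conjI allI impI)
      show "(-1::real) \<in> {-1, 1}" by simp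
      show "0 \<le> (0::real)" by simp
      show "(q / (1+e))^2 \<le> 1" using hb assms by simp
      fix th assume th: "0 < th \<and> th < (q / (1+e))^2"
      have "q / (1+e) \<le> 0" using D e1 by (auto intro!: divide_nonpos_pos)
      then have "0 \<le> (0::real)" "0 \<le> -q / (1+e)" by auto
      from sqrt_between[OF this] th
      have h1: "0 < sqrt th" "sqrt th < -q / (1+e)" by (auto simp: power_divide)
      have "sqrt th * (1+e) < -q" using h1(2) pos_less_divide_eq[of "1+e" "sqrt th" "-q"] e1 by simp
      moreover have "0 < (1 - e) * sqrt th" using h1(1) e1 by simp
      moreover have "(-1 - e) * sqrt th = -(sqrt th * (1+e))" "(-1 + e) * sqrt th = -((1-e) * sqrt th)"
        by (simp_all add: algebra_simps)
      ultimately show "q < (-1 - e) * sqrt th" "p > (-1 + e) * sqrt th" using D by linarith+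
    next
      have "2 * (p^2 + q^2) \<le> 4 * q^2" using D(3) by simp
      then have "(p - q)^2 \<le> 4 * q^2" using twice by linarith
      from sq4[OF this] have "(1 - 2*e) * (p - q)^2 / 4 \<le> (1 - 2*e) * q^2" by simp
      moreover have "0 \<le> e * min (q^2) (p^2)" using e by simp
      ultimately show "(1 - 2*e) * (p - q)^2 / 4 - 9/2 * e * min (q^2) (p^2) \<le> max 0 ((q / (1+e))^2 - 0)"
        using lo[of q] by linarith
    qed
  qed
qed


lemma coord:
  fixes a b e :: real
  assumes "\<bar>a\<bar> \<le> 1" "\<bar>b\<bar> \<le> 1" "0 < e" "e \<le> 1/320"
  shows "\<exists>\<sigma> l hh. \<sigma> \<in> {-1, 1::real} \<and> 0 \<le> l \<and> hh \<le> 1 \<and>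
     (\<forall>th. l < th \<and> th < hh \<longrightarrow> (a < (\<sigma> - e) * sqrt th \<and> b > (\<sigma> + e) * sqrt th) \<or>
                                    (b < (\<sigma> - e) * sqrt th \<and> a > (\<sigma> + e) * sqrt th)) \<and>
     max 0 (hh - l) \<ge> (1 - 2*e) * (a - b)^2 / 4 - 9/2 * e * a^2"
proof -
  have em: "9/2 * e * min (q^2) (p^2) \<le> 9/2 * e * a^2" if "a = q \<or> a = p" for q p
  proof -
    have "min (q^2) (p^2) \<le> a^2" using that by auto
    then show ?thesis using assms(3) by simp
  qed
  show ?thesis
  proof (cases "a \<le> b")
    case True
    from coord0[OF True assms(1,2,3,4)] obtain \<sigma> l hh where
      h: "\<sigma> \<in> {-1, 1::real}" "0 \<le> l" "hh \<le> 1"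
         "\<forall>th. l < th \<and> th < hh \<longrightarrow> a < (\<sigma> - e) * sqrt th \<and> b > (\<sigma> + e) * sqrt th"
         "max 0 (hh - l) \<ge> (1 - 2*e) * (b - a)^2 / 4 - 9/2 * e * min (a^2) (b^2)" by blast
    have "(b - a)^2 = (a - b)^2" by (simp add: power2_commute)
    then show ?thesis using h em[of a b] by (intro exI[of _ \<sigma>] exI[of _ l] exI[of _ hh]) auto
  next
    case False
    then have ba: "b \<le> a" by simp
    from coord0[OF ba assms(2,1,3,4)] obtain \<sigma> l hh where
      h: "\<sigma> \<in> {-1, 1::real}" "0 \<le> l" "hh \<le> 1"
         "\<forall>th. l < th \<and> th < hh \<longrightarrow> b < (\<sigma> - e) * sqrt th \<and> a > (\<sigma> + e) * sqrt th"
         "max 0 (hh - l) \<ge> (1 - 2*e) * (a - b)^2 / 4 - 9/2 * e * min (b^2) (a^2)" by blast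
    then show ?thesis using em[of b a] by (intro exI[of _ \<sigma>] exI[of _ l] exI[of _ hh]) auto
  qed
qed

definition Gc :: "real \<Rightarrow> real^'d \<Rightarrow> (real^'d) set \<Rightarrow> real \<Rightarrow> real^'d \<Rightarrow> real^'d \<Rightarrow> 'd \<Rightarrow> real \<Rightarrow> real \<Rightarrow> bool" where
  "Gc e m S R x c i th sg \<longleftrightarrow> (c \<in> S \<and> ((\<exists>c'\<in>S. c'$i \<le> m$i + (sg + e) * sqrt th * R) \<and> (\<exists>c'\<in>S. c'$i \<ge> m$i + (sg - e) * sqrt th * R) \<longrightarrow>
        (x$i \<le> m$i + sg * sqrt th * R \<longrightarrow> c$i \<le> m$i + (sg + e) * sqrt th * R) \<and>
        (\<not> x$i \<le> m$i + sg * sqrt th * R \<longrightarrow> c$i \<ge> m$i + (sg - e) * sqrt th * R)))"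

lemma Gc_pred: "finite S \<Longrightarrow> Measurable.pred (borel \<Otimes>\<^sub>M borel) (\<lambda>p::real\<times>real. \<not> Gc e m S R x c1 i (fst p) (snd p) \<or> \<not> Gc e m S R x c2 i (fst p) (snd p))"
  unfolding Gc_def by measurable

lemma Gc_sep:
  assumes "0 \<le> e" "0 < R" "ca \<in> S" "cb \<in> S" "0 \<le> th"
    "ca$i < m$i + (sg - e) * sqrt th * R" "cb$i > m$i + (sg + e) * sqrt th * R"
  shows "\<not> Gc e m S R x ca i th sg \<or> \<not> Gc e m S R x cb i th sg"
proof -
  have "(sg + e) * sqrt th * R - (sg - e) * sqrt th * R = 2 * e * sqrt th * R" by (simp add: algebra_simps)
  moreover have "0 \<le> 2 * e * sqrt th * R" using assms(1,2,5) by simp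
  ultimately have "ca$i \<le> m$i + (sg + e) * sqrt th * R" "cb$i \<ge> m$i + (sg - e) * sqrt th * R"
    using assms(6,7) by linarith+
  then have ex: "(\<exists>c'\<in>S. c'$i \<le> m$i + (sg + e) * sqrt th * R) \<and> (\<exists>c'\<in>S. c'$i \<ge> m$i + (sg - e) * sqrt th * R)"
    using assms(3,4) by blast
  show ?thesis
  proof (cases "x$i \<le> m$i + sg * sqrt th * R")
    case True then show ?thesis using ex assms(7) unfolding Gc_def by auto
  next
    case False then show ?thesis using ex assms(6) unfolding Gc_def by auto
  qed
qed


theorem lemma3:
  fixes C :: "(real^'d::finite) set" and \<delta> :: real and x :: "real^'d"
    and med :: "(real^'d) set \<Rightarrow> (real^'d) set \<Rightarrow> real^'d"
    and h :: "nat \<Rightarrow> 'd sample" and t :: nat and c1 c2 :: "real^'d"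
  assumes "finite C" "C \<noteq> {}" "0 < \<delta>" "\<delta> < 1"
    and "\<forall>U S. finite S \<and> S \<noteq> {} \<longrightarrow> is_median S (med U S)"
    and "1 \<le> t"
    and "\<forall>s. 1 \<le> s \<and> s < t \<longrightarrow> fst (snd (h s)) \<in> {0<..<1} \<and> snd (snd (h s)) \<in> {-1, 1}"
  defines "\<epsilon> \<equiv> min (\<delta> / (15 * ln (real (card C)))) (1 / 320)"
  defines "Ct \<equiv> leaf_centers (tree \<epsilon> med C h t) x"
  assumes "c1 \<in> Ct" "c2 \<in> Ct" "c1 \<noteq> c2" "dist c1 c2 \<ge> diam_centers Ct / 2"
  shows "measure sample_space
           {s \<in> space sample_space.
              c1 \<notin> leaf_centers (tree_step \<epsilon> med s (tree \<epsilon> med C h t)) x \<or>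
              c2 \<notin> leaf_centers (tree_step \<epsilon> med s (tree \<epsilon> med C h t)) x}
         \<ge> 1 / (128 * real CARD('d))"
  proof -
  define T where "T = tree \<epsilon> med C h t"
  define E where "E = {s \<in> space sample_space.
              c1 \<notin> leaf_centers (tree_step \<epsilon> med s (tree \<epsilon> med C h t)) x \<or>
              c2 \<notin> leaf_centers (tree_step \<epsilon> med s (tree \<epsilon> med C h t)) x}"
  have invT: "\<forall>u\<in>T. snd u \<subseteq> C" "\<forall>y. \<forall>u\<in>T. \<forall>v\<in>T. y \<in> fst u \<longrightarrow> y \<in> fst v \<longrightarrow> u = v"
    using tree_inv[of \<epsilon> med C h t] unfolding T_def by auto
  have c1C: "c1 \<in> leaf_centers T x" using assms(10) unfolding Ct_def T_def .
  have c2C: "c2 \<in> leaf_centers T x" using assms(11) unfolding Ct_def T_def .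
  from c1C obtain U0 S0 where u0: "(U0, S0) \<in> T" "x \<in> U0" "c1 \<in> S0" unfolding leaf_centers_def by blast
  from c2C obtain U2 S2 where u2: "(U2, S2) \<in> T" "x \<in> U2" "c2 \<in> S2" unfolding leaf_centers_def by blast
  have "(U2, S2) = (U0, S0)" using invT(2) u0 u2 by fastforce
  then have c2S: "c2 \<in> S0" using u2 by simp
  have CtS: "Ct = S0"
  proof -
    have "\<And>U S. (U, S) \<in> T \<Longrightarrow> x \<in> U \<Longrightarrow> (U, S) = (U0, S0)" using invT(2) u0 by fastforce
    then show ?thesis unfolding Ct_def T_def[symmetric] leaf_centers_def using u0 by blast
  qed
  have S0C: "S0 \<subseteq> C" using invT(1) u0 by fastforce
  have finS: "finite S0" using S0C assms(1) finite_subset by blast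
  have neS: "S0 \<noteq> {}" using u0 by auto
  have "card {c1, c2} \<le> card S0" using finS u0(3) c2S by (intro card_mono) auto
  then have cardS: "2 \<le> card S0" using assms(12) by simp
  have "card S0 \<le> card C" using S0C assms(1) by (simp add: card_mono)
  then have cardC: "2 \<le> card C" using cardS by linarith
  have lnpos: "0 < ln (real (card C))" using cardC by simp
  have epos: "0 < \<epsilon>" unfolding \<epsilon>_def using lnpos assms(3) by simp
  have ele: "\<epsilon> \<le> 1/320" unfolding \<epsilon>_def by simp
  define m where "m = med U0 S0"
  define R where "R = Max ((\<lambda>c. norm (c - m)) ` S0)"
  define D where "D = diam_centers S0"
  have ismed: "is_median S0 m" unfolding m_def using assms(5) finS neS by blast
  have hD: "\<forall>a\<in>S0. \<forall>b\<in>S0. dist a b \<le> D"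
    unfolding D_def diam_centers_def using finS by (auto intro!: Max_ge)
  have Rge: "norm (c - m) \<le> R" if "c \<in> S0" for c
    unfolding R_def using finS that by (auto intro!: Max_ge)
  have "R \<in> (\<lambda>c. norm (c - m)) ` S0" unfolding R_def using finS neS by (intro Max_in) auto
  then obtain cs where cs: "cs \<in> S0" "R = norm (cs - m)" by auto
  have R2: "R^2 \<le> 2 * D^2" using median_norm[OF finS ismed cs(1) hD] cs(2) by simp
  have dpos: "0 < dist c1 c2" using assms(12) by simp
  have "dist c1 c2 \<le> norm (c1 - m) + norm (c2 - m)"
    by (metis dist_norm dist_triangle2)
  then have Rpos: "0 < R" using Rge[OF u0(3)] Rge[OF c2S] dpos by linarith
  have dD: "dist c1 c2 \<ge> D / 2" using assms(13) CtS D_def by simp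
  have D0: "0 \<le> D" using hD u0(3) by (meson order_trans zero_le_dist)
  have "(D/2)^2 \<le> (dist c1 c2)^2" using dD D0 by (intro power_mono) auto
  then have dist8: "R^2 / 8 \<le> (dist c1 c2)^2" using R2 by (simp add: power_divide)
  define a where "a i = (c1$i - m$i) / R" for i
  define b where "b i = (c2$i - m$i) / R" for i
  have a1: "\<bar>a i\<bar> \<le> 1" for i
  proof -
    have "\<bar>c1$i - m$i\<bar> \<le> R" using component_le_norm_cart[of "c1 - m" i] Rge[OF u0(3)] by simp
    then have "\<bar>c1$i - m$i\<bar> / R \<le> R / R" using Rpos by (intro divide_right_mono) auto
    moreover have "\<bar>a i\<bar> = \<bar>c1$i - m$i\<bar> / R" unfolding a_def using Rpos by (simp add: abs_divide)
    ultimately show ?thesis using Rpos by simp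
  qed
  have b1: "\<bar>b i\<bar> \<le> 1" for i
  proof -
    have "\<bar>c2$i - m$i\<bar> \<le> R" using component_le_norm_cart[of "c2 - m" i] Rge[OF c2S] by simp
    then have "\<bar>c2$i - m$i\<bar> / R \<le> R / R" using Rpos by (intro divide_right_mono) auto
    moreover have "\<bar>b i\<bar> = \<bar>c2$i - m$i\<bar> / R" unfolding b_def using Rpos by (simp add: abs_divide)
    ultimately show ?thesis using Rpos by simp
  qed
  have suma: "(\<Sum>i\<in>UNIV. (a i)^2) \<le> 1"
  proof -
    have "(\<Sum>i\<in>UNIV. (a i)^2) = (norm (c1 - m))^2 / R^2"
      unfolding a_def normsq by (simp add: power_divide sum_divide_distrib)
    also have "\<dots> \<le> 1" using Rge[OF u0(3)] Rpos by (simp add: power_mono)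
    finally show ?thesis .
  qed
  have sumab: "1/8 \<le> (\<Sum>i\<in>UNIV. (a i - b i)^2)"
  proof -
    have "(\<Sum>i\<in>UNIV. (a i - b i)^2) = (dist c1 c2)^2 / R^2"
    proof -
      have "a i - b i = (c1 - c2)$i / R" for i unfolding a_def b_def by (simp add: diff_divide_distrib)
      then show ?thesis unfolding dist_norm normsq by (simp add: power_divide sum_divide_distrib)
    qed
    also have "1/8 \<le> (dist c1 c2)^2 / R^2" using dist8 Rpos by (simp add: field_simps)
    finally show ?thesis by simp
  qed
  have "\<forall>i. \<exists>\<sigma> l hh. \<sigma> \<in> {-1, 1::real} \<and> 0 \<le> l \<and> hh \<le> 1 \<and>
     (\<forall>th. l < th \<and> th < hh \<longrightarrow> (a i < (\<sigma> - \<epsilon>) * sqrt th \<and> b i > (\<sigma> + \<epsilon>) * sqrt th) \<or>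
                                    (b i < (\<sigma> - \<epsilon>) * sqrt th \<and> a i > (\<sigma> + \<epsilon>) * sqrt th)) \<and>
     max 0 (hh - l) \<ge> (1 - 2*\<epsilon>) * (a i - b i)^2 / 4 - 9/2 * \<epsilon> * (a i)^2"
    using coord[OF a1 b1 epos ele] by blast
  then obtain sg lo hi where sel: "\<And>i. sg i \<in> {-1, 1::real}" "\<And>i. 0 \<le> lo i" "\<And>i. hi i \<le> 1"
    "\<And>i th. lo i < th \<Longrightarrow> th < hi i \<Longrightarrow> (a i < (sg i - \<epsilon>) * sqrt th \<and> b i > (sg i + \<epsilon>) * sqrt th) \<or>
                                    (b i < (sg i - \<epsilon>) * sqrt th \<and> a i > (sg i + \<epsilon>) * sqrt th)"
    "\<And>i. max 0 (hi i - lo i) \<ge> (1 - 2*\<epsilon>) * (a i - b i)^2 / 4 - 9/2 * \<epsilon> * (a i)^2"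
    by metis
  have memc: "c \<in> leaf_centers (tree_step \<epsilon> med s T) x \<longleftrightarrow> Gc \<epsilon> m S0 R x c (fst s) (fst (snd s)) (snd (snd s))" for c s
    unfolding step_leaf[OF invT(2)[THEN spec[of _ x]] u0(1,2) cardS] ds_leaf[OF u0(2)]
    by (simp add: Gc_def Let_def m_def R_def)
  have Eeq: "E = {s \<in> space sample_space. \<not> Gc \<epsilon> m S0 R x c1 (fst s) (fst (snd s)) (snd (snd s)) \<or> \<not> Gc \<epsilon> m S0 R x c2 (fst s) (fst (snd s)) (snd (snd s))}"
    unfolding E_def T_def[symmetric] memc by simp
  have Emeas: "E \<in> sets sample_space"
    unfolding Eeq
    by (rule predE, rule pred_sample[where P="\<lambda>i th sg. \<not> Gc \<epsilon> m S0 R x c1 i th sg \<or> \<not> Gc \<epsilon> m S0 R x c2 i th sg"])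
       (rule Gc_pred[OF finS])
  define E' where "E' = (\<Union>i. {i} \<times> ({lo i<..<hi i} \<times> {sg i}))"
  have E'sub: "E' \<subseteq> E"
  proof
    fix s assume "s \<in> E'"
    then obtain i th where s: "s = (i, th, sg i)" "lo i < th" "th < hi i" unfolding E'_def by auto
    have th0: "0 \<le> th" using s(2) sel(2)[of i] by simp
    have key: "c$i < m$i + (sg i - \<epsilon>) * sqrt th * R"
      if "(c$i - m$i) / R < (sg i - \<epsilon>) * sqrt th" for c :: "real^'d"
    proof -
      have "c$i - m$i < ((sg i - \<epsilon>) * sqrt th) * R" by (metis pos_divide_less_eq[OF Rpos] that)
      then show ?thesis by linarith
    qed
    have key2: "c$i > m$i + (sg i + \<epsilon>) * sqrt th * R"
      if "(c$i - m$i) / R > (sg i + \<epsilon>) * sqrt th" for c :: "real^'d"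
    proof -
      have "((sg i + \<epsilon>) * sqrt th) * R < c$i - m$i" by (metis pos_less_divide_eq[OF Rpos] that)
      then show ?thesis by linarith
    qed
    have "\<not> Gc \<epsilon> m S0 R x c1 i th (sg i) \<or> \<not> Gc \<epsilon> m S0 R x c2 i th (sg i)"
      using sel(4)[OF s(2,3)]
    proof
      assume h: "a i < (sg i - \<epsilon>) * sqrt th \<and> (sg i + \<epsilon>) * sqrt th < b i"
      show ?thesis using Gc_sep[OF _ Rpos u0(3) c2S th0 key key2] h epos unfolding a_def b_def by auto
    next
      assume h: "b i < (sg i - \<epsilon>) * sqrt th \<and> (sg i + \<epsilon>) * sqrt th < a i"
      show ?thesis using Gc_sep[OF _ Rpos c2S u0(3) th0 key key2] h epos unfolding a_def b_def by auto
    qed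
    then show "s \<in> E" unfolding Eeq s(1) by (simp add: sample_space_def space_pair_measure)
  qed
  interpret SP: prob_space "sample_space :: 'd sample measure" by (rule sample_prob)
  have E'meas: "measure sample_space E' = (\<Sum>i\<in>UNIV. max 0 (hi i - lo i) / (2 * real CARD('d)))"
  proof -
    have "measure sample_space E' = (\<Sum>i\<in>UNIV. measure sample_space ({i} \<times> ({lo i<..<hi i} \<times> {sg i})))"
      unfolding E'_def
      by (rule SP.finite_measure_finite_Union)
         (auto simp: disjoint_family_on_def sample_space_def)
    also have "\<dots> = (\<Sum>i\<in>UNIV. max 0 (hi i - lo i) / (2 * real CARD('d)))"
      by (intro sum.cong refl meas_box sel)
    finally show ?thesis .
  qed
  have "1 / (128 * real CARD('d)) \<le> (\<Sum>i\<in>UNIV. max 0 (hi i - lo i) / (2 * real CARD('d)))"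
  proof -
    have "(\<Sum>i\<in>UNIV. ((1 - 2*\<epsilon>) * (a i - b i)^2 / 4 - 9/2 * \<epsilon> * (a i)^2)) \<le> (\<Sum>i\<in>UNIV. max 0 (hi i - lo i))"
      by (intro sum_mono sel)
    moreover have "(\<Sum>i\<in>UNIV. ((1 - 2*\<epsilon>) * (a i - b i)^2 / 4 - 9/2 * \<epsilon> * (a i)^2))
        = (1 - 2*\<epsilon>) / 4 * (\<Sum>i\<in>UNIV. (a i - b i)^2) - 9/2 * \<epsilon> * (\<Sum>i\<in>UNIV. (a i)^2)"
      by (simp add: sum_subtractf sum_distrib_left sum_divide_distrib)
    moreover have "(1 - 2*\<epsilon>) / 4 * (1/8) \<le> (1 - 2*\<epsilon>) / 4 * (\<Sum>i\<in>UNIV. (a i - b i)^2)"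
      using sumab ele by (intro mult_left_mono) auto
    moreover have "9/2 * \<epsilon> * (\<Sum>i\<in>UNIV. (a i)^2) \<le> 9/2 * \<epsilon> * 1"
      using suma epos by (intro mult_left_mono) auto
    moreover have "1/64 \<le> (1 - 2*\<epsilon>) / 4 * (1/8) - 9/2 * \<epsilon> * 1"
    proof -
      have "(1 - 2*\<epsilon>) / 4 * (1/8) - 9/2 * \<epsilon> * 1 = 1/32 - 73/16 * \<epsilon>" by (simp add: field_simps)
      then show ?thesis using ele by linarith
    qed
    ultimately have s1: "1/64 \<le> (\<Sum>i\<in>UNIV. max 0 (hi i - lo i))" by linarith
    have "(\<Sum>i\<in>UNIV. max 0 (hi i - lo i) / (2 * real CARD('d))) = (\<Sum>i\<in>UNIV. max 0 (hi i - lo i)) / (2 * real CARD('d))"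
      by (simp add: sum_divide_distrib)
    moreover have "1 / (128 * real CARD('d)) = (1/64) / (2 * real CARD('d))" by simp
    moreover have "(1/64) / (2 * real CARD('d)) \<le> (\<Sum>i\<in>UNIV. max 0 (hi i - lo i)) / (2 * real CARD('d))"
      using s1 by (intro divide_right_mono) auto
    ultimately show ?thesis by linarith
  qed
  also have "\<dots> = measure sample_space E'" using E'meas by simp
  also have "\<dots> \<le> measure sample_space E" using E'sub Emeas by (intro SP.finite_measure_mono)
  finally show ?thesis unfolding E_def .
qed

end
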